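(* Assume $2\le|\mathcal U_{\mathcal E}|\le T$ and $T_1\ge|\mathcal U_{\mathcal E}|$. Then for any $S_i\neq S_j\in\mathcal U_{\mathcal E}$, the ATE estimate produced by UCB-TSN satisfies $$\mathbb E\big[|\hat\Delta^{(i,j)}_T-\Delta^{(i,j)}|\big]=\tilde O\Big(\sqrt{|\mathcal U_{\mathcal E}|/T_1}\Big).$$
   Context: Bandit with network interference: arm set $\mathcal K=[K]$, units $\mathcal U=[N]$, horizon $T$, fixed adjacency matrix $\mathbb H$. Choosing a super arm $A\in\mathcal K^{\mathcal U}$ in round $t$ yields for each unit $i$ the reward $r_{i,t}(A)=Y_i(A)+\eta_{i,t}$ with unknown $Y_i(A)\in[0,1]$ and i.i.d. zero-mean 1-sub-Gaussian noise $\eta_{i,t}$. A fixed exposure mapping $\mathbf S:\mathcal U\times\mathcal K^{\mathcal U}\times\{\mathbb H\}\to\mathcal U_s$ ($|\mathcal U_s|=d_s$) assigns to $A$ the exposure super arm $(\mathbf S(i,A,\mathbb H))_{i\in\mathcal U}$. With a fixed partition $\mathcal C$ of $[N]$ into clusters, $\mathcal U_{\mathcal C}$ = exposure vectors constant on each cluster, $\mathcal U_{\mathcal O}$ = exposure vectors realized by some $A$, $\mathcal U_{\mathcal E}=\mathcal U_{\mathcal C}\cap\mathcal U_{\mathcal O}$. For $S\in\mathcal U_{\mathcal E}$, $\tilde Y_i(S)=\sum_AY_i(A)\mathbb P(A\mid S)$ where $\mathbb P(\cdot\mid S)$ is uniform over the super arms $A$ whose exposure super arm equals $S$. ATE: $\Delta^{(i,j)}=\frac1N\sum_{i'\in\mathcal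 U}(\tilde Y_{i'}(S_i)-\tilde Y_{i'}(S_j))$. Sampling$(S)$: draw $A$ uniformly among super arms with exposure super arm $S$, pull it, and record $\tilde r_{i,t}(S):=r_{i,t}(A)$ for all $i$. Algorithm UCB-TSN (parameters $T_1\le T$, $\delta$): Let $\mathcal N^t_S$ be the number of rounds $t'\le t$ with $S_{t'}=S$ and $\hat R_t(S)$ the average of $\frac1N\sum_{i}\tilde r_{i,t'}(S_{t'})$ over those rounds ($0$ if none). Phase 1: for $t=1,\dots,T_1$, play the exposure super arms of $\mathcal U_{\mathcal E}$ in round-robin order, using Sampling; then output $\hat\Delta^{(i,j)}_T=\hat R_{T_1}(S_i)-\hat R_{T_1}(S_j)$ for all $S_i\neq S_j$. Phase 2: for $t=T_1+1,\dots,T$, play $S_t=\arg\max_{S\in\mathcal U_{\mathcal E}}\mathrm{UCB}_{t-1,S}$ via Sampling, where $\mathrm{UCB}_{t,S}=\hat R_t(S)+\sqrt{9\log(1/\delta)/\mathcal N^t_S}$. $\tilde O$ hides polylogarithmic factors and the order is with respect to $K,T$ (and $T_1$). *)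

theory Defs
  imports "HOL-Probability.Probability"
begin

text \<open>Units are {..<N}, arms are {..<K}. A super arm is an extensional function
  in PiE {..<N} (\<lambda>_. {..<K}). The exposure mapping S takes a unit, a super arm
  and the (fixed) adjacency matrix H.\<close>

definition superarms :: "nat \<Rightarrow> nat \<Rightarrow> (nat \<Rightarrow> nat) set" where
  "superarms N K = PiE {..<N} (\<lambda>_. {..<K})"

definition expo_vec ::
  "nat \<Rightarrow> (nat \<Rightarrow> (nat \<Rightarrow> nat) \<Rightarrow> (nat \<Rightarrow> nat \<Rightarrow> real) \<Rightarrow> 'e)
   \<Rightarrow> (nat \<Rightarrow> nat \<Rightarrow> real) \<Rightarrow> (nat \<Rightarrow> nat) \<Rightarrow> (nat \<Rightarrow> 'e)" where
  "expo_vec N S H A = (\<lambda>i\<in>{..<N}. S i A H)"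

definition U_C :: "nat \<Rightarrow> 'e set \<Rightarrow> nat set set \<Rightarrow> (nat \<Rightarrow> 'e) set" where
  "U_C N Us Cl = {v \<in> PiE {..<N} (\<lambda>_. Us). \<forall>c\<in>Cl. \<forall>i\<in>c. \<forall>j\<in>c. v i = v j}"

definition U_O where
  "U_O N K S H = expo_vec N S H ` superarms N K"

definition U_E where
  "U_E N K S H Us Cl = U_C N Us Cl \<inter> U_O N K S H"

definition preimg where
  "preimg N K S H v = {A \<in> superarms N K. expo_vec N S H A = v}"

definition Ytil :: "nat \<Rightarrow> nat \<Rightarrow> _ \<Rightarrow> _ \<Rightarrow> (nat \<Rightarrow> (nat \<Rightarrow> nat) \<Rightarrow> real)
    \<Rightarrow> nat \<Rightarrow> (nat \<Rightarrow> 'e) \<Rightarrow> real" where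
  "Ytil N K S H Y i v = (\<Sum>A\<in>preimg N K S H v. Y i A) / real (card (preimg N K S H v))"

definition ATE where
  "ATE N K S H Y v w = (1 / real N) * (\<Sum>i<N. Ytil N K S H Y i v - Ytil N K S H Y i w)"

definition sub_gaussian1 :: "real measure \<Rightarrow> bool" where
  "sub_gaussian1 D \<longleftrightarrow> prob_space D \<and> sets D = sets borel \<and>
     integrable D (\<lambda>x. x) \<and> (\<integral>x. x \<partial>D) = 0 \<and>
     (\<forall>l::real. integrable D (\<lambda>x. exp (l * x)) \<and>
        (\<integral>x. exp (l * x) \<partial>D) \<le> exp (l\<^sup>2 / 2))"

definition rr_arm :: "'a list \<Rightarrow> nat \<Rightarrow> 'a" where
  "rr_arm es t = es ! ((t - 1) mod length es)"

text \<open>Law of the Phase-1 history: in each round t \<in> {1..T1} an independent super arm drawn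
  uniformly among those with exposure super arm rr_arm es t (Sampling), together with
  i.i.d. noise (eta_{i,t})_{i<N} with law D.\<close>
definition phase1_space ::
  "nat \<Rightarrow> nat \<Rightarrow> _ \<Rightarrow> _ \<Rightarrow> real measure \<Rightarrow> (nat \<Rightarrow> 'e) list \<Rightarrow> nat
    \<Rightarrow> (nat \<Rightarrow> (nat \<Rightarrow> nat) \<times> (nat \<Rightarrow> real)) measure" where
  "phase1_space N K S H D es T1 =
     PiM {1..T1} (\<lambda>t. measure_pmf (pmf_of_set (preimg N K S H (rr_arm es t)))
                        \<Otimes>\<^sub>M PiM {..<N} (\<lambda>_. D))"

text \<open>Empirical mean reward R-hat_{T1}(v) of exposure super arm v after Phase 1;
  omega t = (A_t, eta_t), and the recorded reward of unit i is Y i A_t + eta_t i.\<close>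
definition Rhat where
  "Rhat N Y es T1 \<omega> v =
     (let R = {t \<in> {1..T1}. rr_arm es t = v} in
      if R = {} then 0
      else (\<Sum>t\<in>R. (1 / real N) * (\<Sum>i<N. Y i (fst (\<omega> t)) + snd (\<omega> t) i)) / real (card R))"

definition ATE_hat where
  "ATE_hat N Y es T1 \<omega> v w = Rhat N Y es T1 \<omega> v - Rhat N Y es T1 \<omega> w"

end

theory Submission
  imports Defs
begin


lemma comp_int:
  fixes M :: "'i \<Rightarrow> 'a measure" and f :: "'a \<Rightarrow> real"
  assumes "product_prob_space M" "t \<in> I" "f \<in> borel_measurable (M t)" "integrable (M t) f"
  shows "integrable (PiM I M) (\<lambda>\<omega>. f (\<omega> t)) \<and> integral\<^sup>L (PiM I M) (\<lambda>\<omega>. f (\<omega> t)) = integral\<^sup>L (M t) f"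
proof -
  interpret product_prob_space M I using assms(1) by (simp add: product_prob_space_def)
  have d: "distr (PiM I M) (M t) (\<lambda>\<omega>. \<omega> t) = M t" using PiM_component[OF assms(2)] .
  have m: "(\<lambda>\<omega>. \<omega> t) \<in> measurable (PiM I M) (M t)"
    using assms(2) by (rule measurable_component_singleton)
  show ?thesis
    using integrable_distr_eq[OF m assms(3)] integral_distr[OF m assms(3)] assms(4) d by simp
qed

lemma var_sum_prod:
  fixes M :: "'i \<Rightarrow> 'a measure" and h :: "'i \<Rightarrow> 'a \<Rightarrow> real"
  assumes PP: "product_prob_space M" and fin: "finite I"
    and hm: "\<And>t. t \<in> I \<Longrightarrow> h t \<in> borel_measurable (M t)"
    and hi: "\<And>t. t \<in> I \<Longrightarrow> integrable (M t) (\<lambda>x. (h t x)^2)"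
    and h0: "\<And>t. t \<in> I \<Longrightarrow> integral\<^sup>L (M t) (h t) = 0"
    and hV: "\<And>t. t \<in> I \<Longrightarrow> integral\<^sup>L (M t) (\<lambda>x. (h t x)^2) \<le> V"
  shows "integrable (PiM I M) (\<lambda>\<omega>. (\<Sum>t\<in>I. c t * h t (\<omega> t))^2) \<and>
         integral\<^sup>L (PiM I M) (\<lambda>\<omega>. (\<Sum>t\<in>I. c t * h t (\<omega> t))^2) \<le> V * (\<Sum>t\<in>I. (c t)^2)"
proof -
  interpret product_prob_space M I using assms(1) by (simp add: product_prob_space_def)
  have hI: "integrable (M t) (h t)" if "t \<in> I" for t
  proof -
    have "finite_measure (M t)" using M.prob_space_axioms prob_space.finite_measure by blast
    then show ?thesis using finite_measure.square_integrable_imp_integrable[OF _ hm[OF that] hi[OF that]] by blast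
  qed
  define F where "F t s \<omega> = c t * c s * (h t (\<omega> t) * h s (\<omega> s))" for t s \<omega>
  have sq: "(\<Sum>t\<in>I. c t * h t (\<omega> t))^2 = (\<Sum>t\<in>I. \<Sum>s\<in>I. F t s \<omega>)" for \<omega>
    unfolding power2_eq_square sum_product F_def by (intro sum.cong refl) (simp add: algebra_simps)
  have FF: "integrable (PiM I M) (F t s) \<and> integral\<^sup>L (PiM I M) (F t s) = (if t = s then (c t)^2 * integral\<^sup>L (M t) (\<lambda>x. (h t x)^2) else 0)"
    if ts: "t \<in> I" "s \<in> I" for t s
  proof (cases "t = s")
    case True
    have e: "F t s = (\<lambda>\<omega>. (c t)^2 * (h t (\<omega> t))^2)" using True by (auto simp: F_def power2_eq_square fun_eq_iff)
    from comp_int[OF PP ts(1) _ hi[OF ts(1)]] hm[OF ts(1)] show ?thesis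
      unfolding e using True by simp
  next
    case False
    define f where "f u = (if u = t then h t else if u = s then h s else (\<lambda>_. 1))" for u
    have e: "(\<Prod>u\<in>I. f u (\<omega> u)) = h t (\<omega> t) * h s (\<omega> s)" for \<omega>
    proof -
      have "(\<Prod>u\<in>I. f u (\<omega> u)) = f t (\<omega> t) * (\<Prod>u\<in>I-{t}. f u (\<omega> u))"
        using fin ts by (simp add: prod.remove)
      also have "(\<Prod>u\<in>I-{t}. f u (\<omega> u)) = f s (\<omega> s) * (\<Prod>u\<in>I-{t}-{s}. f u (\<omega> u))"
        using fin ts False by (intro prod.remove) auto
      also have "(\<Prod>u\<in>I-{t}-{s}. f u (\<omega> u)) = 1"
        by (rule prod.neutral) (auto simp: f_def)
      finally show ?thesis using False by (simp add: f_def)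
    qed
    have fi: "integrable (M u) (f u)" if "u \<in> I" for u
      using hI that by (auto simp: f_def)
    have "integrable (PiM I M) (\<lambda>\<omega>. \<Prod>u\<in>I. f u (\<omega> u))"
      using product_integrable_prod[OF fin fi] by simp
    moreover have "integral\<^sup>L (PiM I M) (\<lambda>\<omega>. \<Prod>u\<in>I. f u (\<omega> u)) = (\<Prod>u\<in>I. integral\<^sup>L (M u) (f u))"
      using product_integral_prod[OF fin fi] by simp
    moreover have "(\<Prod>u\<in>I. integral\<^sup>L (M u) (f u)) = 0"
      using fin ts h0[OF ts(1)] by (intro prod_zero) (auto simp: f_def intro!: bexI[of _ t])
    ultimately show ?thesis
      using False unfolding F_def e by simp
  qed
  have FFi: "integrable (PiM I M) (F t s)" if "t \<in> I" "s \<in> I" for t s using FF that by blast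
  have int: "integrable (PiM I M) (\<lambda>\<omega>. \<Sum>t\<in>I. \<Sum>s\<in>I. F t s \<omega>)"
    apply (rule Bochner_Integration.integrable_sum) apply (rule Bochner_Integration.integrable_sum) using FFi by blast
  have "integral\<^sup>L (PiM I M) (\<lambda>\<omega>. \<Sum>t\<in>I. \<Sum>s\<in>I. F t s \<omega>) = (\<Sum>t\<in>I. \<Sum>s\<in>I. integral\<^sup>L (PiM I M) (F t s))"
    apply (subst Bochner_Integration.integral_sum)
     apply (rule Bochner_Integration.integrable_sum) using FFi apply blast
    apply (rule sum.cong[OF refl])
    apply (subst Bochner_Integration.integral_sum) using FFi by auto
  also have "\<dots> = (\<Sum>t\<in>I. \<Sum>s\<in>I. (if t = s then (c t)^2 * integral\<^sup>L (M t) (\<lambda>x. (h t x)^2) else 0))"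
    using FF by (intro sum.cong refl) auto
  also have "\<dots> = (\<Sum>t\<in>I. (c t)^2 * integral\<^sup>L (M t) (\<lambda>x. (h t x)^2))"
    using fin by (simp add: sum.delta)
  also have "\<dots> \<le> (\<Sum>t\<in>I. (c t)^2 * V)"
    using hV by (intro sum_mono mult_left_mono) auto
  finally show ?thesis using int unfolding sq by (simp add: sum_distrib_left mult.commute)
qed



lemma sq_le_exp: "(x::real)^2 \<le> 2 * exp x + 2 * exp (-x)"
proof (cases "x \<ge> 0")
  case True
  have "1 + x + x\<^sup>2 / 2 \<le> exp x" by (rule exp_lower_Taylor_quadratic[OF True])
  moreover have "exp (-x) > 0" by simp
  ultimately have "x^2 \<le> 2 * exp x" using True by (simp add: field_simps)
  then show ?thesis using \<open>exp (-x) > 0\<close> by linarith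
next
  case False
  have "1 + (-x) + (-x)\<^sup>2 / 2 \<le> exp (-x)" by (rule exp_lower_Taylor_quadratic) (use False in simp)
  moreover have "exp x > 0" by simp
  ultimately have "x^2 \<le> 2 * exp (-x)" using False by (simp add: field_simps)
  then show ?thesis using \<open>exp x > 0\<close> by linarith
qed

lemma subg_moments:
  assumes "sub_gaussian1 D"
  shows "prob_space D" "(\<lambda>x. x) \<in> borel_measurable D" "integrable D (\<lambda>x. x)" "integral\<^sup>L D (\<lambda>x. x) = 0"
    "integrable D (\<lambda>x. x^2)" "integral\<^sup>L D (\<lambda>x. x^2) \<le> 4 * exp (1/2)"
proof -
  note d = assms[unfolded sub_gaussian1_def]
  show "prob_space D" "integrable D (\<lambda>x. x)" "integral\<^sup>L D (\<lambda>x. x) = 0" using d by auto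
  have sD: "sets D = sets borel" using d by auto
  have [measurable_cong]: "sets D = sets borel" by (rule sD)
  show bm: "(\<lambda>x. x) \<in> borel_measurable D" by measurable
  have i1: "integrable D (\<lambda>x. exp (1 * x))" and i2: "integrable D (\<lambda>x. exp ((-1) * x))" using d by blast+
  have e1: "integral\<^sup>L D (\<lambda>x. exp (1 * x)) \<le> exp (1/2)" and e2: "integral\<^sup>L D (\<lambda>x. exp ((-1) * x)) \<le> exp (1/2)"
    using d[THEN conjunct2, THEN conjunct2, THEN conjunct2, THEN conjunct2, rule_format, of 1]
          d[THEN conjunct2, THEN conjunct2, THEN conjunct2, THEN conjunct2, rule_format, of "-1"] by auto
  have ig: "integrable D (\<lambda>x. 2 * (exp x + exp (-x)))" using i1 i2 by simp
  show i: "integrable D (\<lambda>x. x^2)"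
    by (rule Bochner_Integration.integrable_bound[OF ig]) (auto intro!: AE_I2 simp add: sq_le_exp)
  have "integral\<^sup>L D (\<lambda>x. x^2) \<le> integral\<^sup>L D (\<lambda>x. 2 * (exp x + exp (-x)))"
    by (rule integral_mono[OF i ig]) (use sq_le_exp in auto)
  also have "\<dots> = 2 * (integral\<^sup>L D (\<lambda>x. exp (1 * x)) + integral\<^sup>L D (\<lambda>x. exp ((-1) * x)))"
    using i1 i2 by simp
  also have "\<dots> \<le> 4 * exp (1/2)" using e1 e2 by simp
  finally show "integral\<^sup>L D (\<lambda>x. x^2) \<le> 4 * exp (1/2)" .
qed

lemma distr_pair_snd':
  assumes "prob_space N" "prob_space M"
  shows "distr (N \<Otimes>\<^sub>M M) M snd = M"
proof (intro measure_eqI)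
  interpret N: prob_space N by fact
  interpret M: prob_space M by fact
  fix A assume A: "A \<in> sets (distr (N \<Otimes>\<^sub>M M) M snd)"
  from A have "emeasure (distr (N \<Otimes>\<^sub>M M) M snd) A = emeasure (N \<Otimes>\<^sub>M M) (space N \<times> A)"
    by (auto simp add: emeasure_distr space_pair_measure dest: sets.sets_into_space intro!: arg_cong2[where f=emeasure])
  with A show "emeasure (distr (N \<Otimes>\<^sub>M M) M snd) A = emeasure M A"
    by (simp add: M.emeasure_pair_measure_Times N.emeasure_space_1)
qed simp

lemma abs_le_sqrt:
  fixes X :: "'a \<Rightarrow> real"
  assumes "prob_space P" "X \<in> borel_measurable P" "integrable P (\<lambda>x. (X x)^2)"
    "integral\<^sup>L P (\<lambda>x. (X x)^2) \<le> V" "V > 0"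
  shows "(\<integral>\<^sup>+x. ennreal \<bar>X x\<bar> \<partial>P) \<le> ennreal (sqrt V)"
proof -
  interpret prob_space P by fact
  define a where "a = 1 / sqrt V"
  have a: "a > 0" using assms(5) by (simp add: a_def)
  have pw: "\<bar>X x\<bar> \<le> (a * (X x)^2 + 1/a) / 2" for x
  proof -
    have "0 \<le> (a * \<bar>X x\<bar> - 1)^2" by simp
    then have "2 * a * \<bar>X x\<bar> \<le> a^2 * (X x)^2 + 1" by (simp add: power2_eq_square algebra_simps)
    then show ?thesis using a by (simp add: field_simps power2_eq_square)
  qed
  have ig: "integrable P (\<lambda>x. (a * (X x)^2 + 1/a) / 2)" using assms(3) by simp
  have "(\<integral>\<^sup>+x. ennreal \<bar>X x\<bar> \<partial>P) \<le> (\<integral>\<^sup>+x. ennreal ((a * (X x)^2 + 1/a) / 2) \<partial>P)"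
    by (intro nn_integral_mono ennreal_leI pw)
  also have "\<dots> = ennreal (integral\<^sup>L P (\<lambda>x. (a * (X x)^2 + 1/a) / 2))"
    using a by (intro nn_integral_eq_integral ig; auto)
  also have "integral\<^sup>L P (\<lambda>x. (a * (X x)^2 + 1/a) / 2) = (a * integral\<^sup>L P (\<lambda>x. (X x)^2) + 1/a) / 2"
    using assms(3) prob_space by simp
  also have "\<dots> \<le> (a * V + 1/a) / 2" using assms(4) a by (simp add: divide_right_mono mult_left_mono)
  also have "(a * V + 1/a) / 2 = sqrt V" using assms(5) unfolding a_def
    by (simp add: field_simps)
  finally show ?thesis by (simp add: ennreal_leI)
qed



lemma pps_const: "prob_space D \<Longrightarrow> product_prob_space (\<lambda>_::'i. D)"
  unfolding product_prob_space_def product_prob_space_axioms_def product_sigma_finite_def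
  by (simp add: prob_space_imp_sigma_finite)

lemma round_moments:
  fixes Y :: "nat \<Rightarrow> (nat \<Rightarrow> nat) \<Rightarrow> real" and P :: "(nat\<Rightarrow>nat) set" and D :: "real measure"
  assumes finP: "finite P" and neP: "P \<noteq> {}" and Yb: "\<forall>i<N. \<forall>A\<in>P. 0 \<le> Y i A \<and> Y i A \<le> 1"
    and sg: "sub_gaussian1 D" and Npos: "N > 0"
    and \<mu>_def: "\<mu> = (1/real N) * (\<Sum>i<N. (\<Sum>A\<in>P. Y i A) / real (card P))"
  defines "M \<equiv> measure_pmf (pmf_of_set P) \<Otimes>\<^sub>M PiM {..<N} (\<lambda>_. D)"
  and "h \<equiv> \<lambda>x. (1/real N) * (\<Sum>i<N. Y i (fst x) + snd x i) - \<mu>"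
  shows "prob_space M" "h \<in> borel_measurable M" "integrable M (\<lambda>x. (h x)^2)" "integral\<^sup>L M h = 0"
    "integral\<^sup>L M (\<lambda>x. (h x)^2) \<le> 2 + 8 * exp (1/2)"
proof -
  define Mp where "Mp = measure_pmf (pmf_of_set P)"
  define Q where "Q = PiM {..<N} (\<lambda>_. D)"
  have M_eq: "M = Mp \<Otimes>\<^sub>M Q" unfolding M_def Mp_def Q_def ..
  note D = subg_moments[OF sg]
  have [measurable_cong]: "sets D = sets borel" using sg unfolding sub_gaussian1_def by auto
  have pD: "product_prob_space (\<lambda>_::nat. D)" by (rule pps_const[OF D(1)])
  have pQ: "prob_space Q" unfolding Q_def by (rule prob_space_PiM) (use D(1) in auto)
  have pMp: "prob_space Mp" unfolding Mp_def by (rule prob_space_measure_pmf)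
  show pM: "prob_space M" unfolding M_eq by (rule prob_space_pair[OF pMp pQ])
  define a where "a A = (1/real N) * (\<Sum>i<N. Y i A) - \<mu>" for A
  define b where "b \<eta> = (1/real N) * (\<Sum>i<N. \<eta> i)" for \<eta> :: "nat \<Rightarrow> real"
  have h_eq: "h = (\<lambda>x. a (fst x) + b (snd x))"
    unfolding h_def a_def b_def by (auto simp: fun_eq_iff sum.distrib algebra_simps)
  have am: "a \<in> borel_measurable Mp" unfolding Mp_def by simp
  have bm: "b \<in> borel_measurable Q" unfolding Q_def b_def by measurable
  have mfst: "fst \<in> measurable M Mp" unfolding M_eq by (rule measurable_fst)
  have msnd: "snd \<in> measurable M Q" unfolding M_eq by (rule measurable_snd)
  have dfst: "distr M Mp fst = Mp" unfolding M_eq by (rule prob_space.distr_pair_fst[OF pQ])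
  have dsnd: "distr M Q snd = Q" unfolding M_eq by (rule distr_pair_snd'[OF pMp pQ])
  have setp: "set_pmf (pmf_of_set P) = P" using finP neP by simp
  have intMp: "integrable Mp f" for f :: "_ \<Rightarrow> real" unfolding Mp_def
    by (rule integrable_measure_pmf_finite) (simp add: setp finP)
  have intMp_eq: "integral\<^sup>L Mp f = (\<Sum>A\<in>P. f A) / real (card P)" for f :: "_ \<Rightarrow> real"
    unfolding Mp_def using finP neP by (simp add: integral_pmf_of_set)
  have aP: "\<bar>a A\<bar> \<le> 1" if "A \<in> P" for A
  proof -
    have s1: "0 \<le> (1/real N) * (\<Sum>i<N. Y i A)" using Yb that by (intro mult_nonneg_nonneg sum_nonneg) auto
    have "(\<Sum>i<N. Y i A) \<le> (\<Sum>i<N. 1)" using Yb that by (intro sum_mono) auto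
    then have s2: "(1/real N) * (\<Sum>i<N. Y i A) \<le> 1" using Npos by (simp add: field_simps)
    have cP: "real (card P) > 0" using finP neP by (simp add: card_gt_0_iff)
    have "(\<Sum>B\<in>P. Y i B) / real (card P) \<ge> 0" if "i < N" for i
      using Yb that by (auto intro!: divide_nonneg_pos sum_nonneg cP)
    then have m1: "0 \<le> \<mu>" unfolding \<mu>_def by (intro mult_nonneg_nonneg sum_nonneg) auto
    have "(\<Sum>B\<in>P. Y i B) / real (card P) \<le> 1" if "i < N" for i
    proof -
      have "(\<Sum>B\<in>P. Y i B) \<le> (\<Sum>B\<in>P. 1)" using Yb that by (intro sum_mono) auto
      then show ?thesis using cP by (simp add: field_simps)
    qed
    then have "(\<Sum>i<N. (\<Sum>B\<in>P. Y i B) / real (card P)) \<le> (\<Sum>i<N. 1)" by (intro sum_mono) auto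
    then have m2: "\<mu> \<le> 1" unfolding \<mu>_def using Npos by (simp add: field_simps)
    show ?thesis unfolding a_def using s1 s2 m1 m2 by linarith
  qed
  have a0: "integral\<^sup>L Mp a = 0"
  proof -
    have "(\<Sum>A\<in>P. a A) = (1/real N) * (\<Sum>i<N. \<Sum>A\<in>P. Y i A) - real (card P) * \<mu>"
      unfolding a_def by (simp add: sum_subtractf sum_distrib_left[symmetric] sum.swap[of _ P] sum_divide_distrib[symmetric])
    also have "\<dots> = 0" unfolding \<mu>_def using finP neP
      by (simp add: sum_divide_distrib[symmetric] card_gt_0_iff)
    finally show ?thesis by (simp add: intMp_eq)
  qed
  have a2: "integral\<^sup>L Mp (\<lambda>A. (a A)^2) \<le> 1"
  proof -
    have "(\<Sum>A\<in>P. (a A)^2) \<le> (\<Sum>A\<in>P. 1)"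
      using aP by (intro sum_mono) (simp add: abs_le_square_iff[symmetric] power_le_one abs_square_le_1)
    then show ?thesis using finP neP by (simp add: intMp_eq card_gt_0_iff field_simps)
  qed
  have compD: "integrable Q (\<lambda>\<eta>. f (\<eta> i)) \<and> integral\<^sup>L Q (\<lambda>\<eta>. f (\<eta> i)) = integral\<^sup>L D f"
    if "i < N" "f \<in> borel_measurable D" "integrable D f" for i and f :: "real \<Rightarrow> real"
    unfolding Q_def using comp_int[OF pD _ that(2,3), of i "{..<N}"] that(1) by simp
  have eta1: "integrable Q (\<lambda>\<eta>. \<eta> i) \<and> integral\<^sup>L Q (\<lambda>\<eta>. \<eta> i) = 0" if "i < N" for i
    using compD[OF that D(2) D(3)] D(4) by simp
  have eta2: "integrable Q (\<lambda>\<eta>. (\<eta> i)^2) \<and> integral\<^sup>L Q (\<lambda>\<eta>. (\<eta> i)^2) \<le> 4 * exp (1/2)" if "i < N" for i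
  proof -
    have "(\<lambda>x::real. x^2) \<in> borel_measurable D" by measurable
    then show ?thesis using compD[OF that _ D(5)] D(6) by simp
  qed
  have bi: "integrable Q b" unfolding b_def using eta1 by (intro integrable_mult_right Bochner_Integration.integrable_sum) auto
  have b0: "integral\<^sup>L Q b = 0" unfolding b_def
    using eta1 by (subst integral_mult_right_zero, subst Bochner_Integration.integral_sum) auto
  define g where "g \<eta> = (1/real N) * (\<Sum>i<N. (\<eta> i)^2)" for \<eta> :: "nat \<Rightarrow> real"
  have gi: "integrable Q g" unfolding g_def using eta2 by (intro integrable_mult_right Bochner_Integration.integrable_sum) auto
  have gI: "integral\<^sup>L Q g \<le> 4 * exp (1/2)"
  proof -
    have "integral\<^sup>L Q g = (1/real N) * (\<Sum>i<N. integral\<^sup>L Q (\<lambda>\<eta>. (\<eta> i)^2))" unfolding g_def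
      using eta2 by (subst integral_mult_right_zero, subst Bochner_Integration.integral_sum) auto
    also have "\<dots> \<le> (1/real N) * (\<Sum>i<N. 4 * exp (1/2))"
      using eta2 by (intro mult_left_mono sum_mono) auto
    also have "\<dots> = 4 * exp (1/2)" using Npos by simp
    finally show ?thesis .
  qed
  have bg: "(b \<eta>)^2 \<le> g \<eta>" for \<eta>
  proof -
    have "(\<Sum>i<N. \<eta> i)^2 \<le> (\<Sum>i<N. (\<eta> i)^2) * real N"
      using sum_squared_le_sum_of_squares[of \<eta> "{..<N}"] by simp
    then show ?thesis unfolding b_def g_def using Npos
      by (simp add: power_mult_distrib power2_eq_square field_simps)
  qed
  have gm: "g \<in> borel_measurable Q" unfolding Q_def g_def by measurable
  have b2i: "integrable Q (\<lambda>\<eta>. (b \<eta>)^2)"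
    by (rule Bochner_Integration.integrable_bound[OF gi]) (use bm bg in \<open>auto intro!: AE_I2 intro: order_trans[OF _ abs_ge_self]\<close>)
  have b2: "integral\<^sup>L Q (\<lambda>\<eta>. (b \<eta>)^2) \<le> 4 * exp (1/2)"
    using integral_mono[OF b2i gi] bg gI by (meson order_trans)
  have tr: "integrable M (\<lambda>x. f (fst x)) \<and> integral\<^sup>L M (\<lambda>x. f (fst x)) = integral\<^sup>L Mp f"
    if "f \<in> borel_measurable Mp" "integrable Mp f" for f :: "_ \<Rightarrow> real"
    using integrable_distr_eq[OF mfst that(1)] integral_distr[OF mfst that(1)] dfst that(2) by simp
  have tr2: "integrable M (\<lambda>x. f (snd x)) \<and> integral\<^sup>L M (\<lambda>x. f (snd x)) = integral\<^sup>L Q f"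
    if "f \<in> borel_measurable Q" "integrable Q f" for f :: "_ \<Rightarrow> real"
    using integrable_distr_eq[OF msnd that(1)] integral_distr[OF msnd that(1)] dsnd that(2) by simp
  note A1 = tr[OF am intMp]
  have a2m: "(\<lambda>A. (a A)^2) \<in> borel_measurable Mp" unfolding Mp_def by simp
  note A2 = tr[OF a2m intMp]
  note B1 = tr2[OF bm bi]
  have b2m: "(\<lambda>\<eta>. (b \<eta>)^2) \<in> borel_measurable Q" using bm by measurable
  note B2 = tr2[OF b2m b2i]
  have hm: "h \<in> borel_measurable M" unfolding h_eq
    using measurable_compose[OF mfst am] measurable_compose[OF msnd bm] by measurable
  then show "h \<in> borel_measurable M" .
  have ub: "(h x)^2 \<le> 2 * (a (fst x))^2 + 2 * (b (snd x))^2" for x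
  proof -
    have "0 \<le> (a (fst x) - b (snd x))^2" by simp
    then show ?thesis unfolding h_eq by (simp add: power2_eq_square algebra_simps)
  qed
  have iub: "integrable M (\<lambda>x. 2 * (a (fst x))^2 + 2 * (b (snd x))^2)"
    using A2 B2 bm am by auto
  show h2i: "integrable M (\<lambda>x. (h x)^2)"
    by (rule Bochner_Integration.integrable_bound[OF iub]) (use hm ub in \<open>auto intro!: AE_I2\<close>)
  show "integral\<^sup>L M h = 0" unfolding h_eq using A1 B1 a0 b0 by simp
  have "integral\<^sup>L M (\<lambda>x. (h x)^2) \<le> integral\<^sup>L M (\<lambda>x. 2 * (a (fst x))^2 + 2 * (b (snd x))^2)"
    by (rule integral_mono[OF h2i iub]) (rule ub)
  also have "\<dots> = 2 * integral\<^sup>L Mp (\<lambda>A. (a A)^2) + 2 * integral\<^sup>L Q (\<lambda>\<eta>. (b \<eta>)^2)"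
    using A2 B2 bm am by auto
  also have "\<dots> \<le> 2 + 8 * exp (1/2)" using a2 b2 by linarith
  finally show "integral\<^sup>L M (\<lambda>x. (h x)^2) \<le> 2 + 8 * exp (1/2)" .
qed



lemma count_rr:
  assumes "v \<in> set es" "length es \<le> T1"
  shows "T1 div length es \<le> card {t \<in> {1..T1}. rr_arm es t = v}"
proof -
  define m where "m = length es"
  have m0: "m > 0" using assms(1) unfolding m_def by (cases es) auto
  obtain j where j: "j < m" "es ! j = v" using assms(1) unfolding m_def by (auto simp: in_set_conv_nth)
  define f where "f q = q * m + j + 1" for q
  have inj: "inj_on f {..<T1 div m}" unfolding f_def inj_on_def using m0 by auto
  have sub: "f ` {..<T1 div m} \<subseteq> {t \<in> {1..T1}. rr_arm es t = v}"
  proof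
    fix t assume "t \<in> f ` {..<T1 div m}"
    then obtain q where q: "q < T1 div m" "t = f q" by auto
    have "Suc q \<le> T1 div m" using q by simp
    then have "Suc q * m \<le> (T1 div m) * m" by (rule mult_right_mono) simp
    also have "\<dots> \<le> T1" by (simp add: div_times_less_eq_dividend)
    finally have "q * m + m \<le> T1" by simp
    then have "t \<le> T1" using q j unfolding f_def by simp
    moreover have "rr_arm es t = v" unfolding rr_arm_def q(2) f_def m_def[symmetric]
      using j by simp
    ultimately show "t \<in> {t \<in> {1..T1}. rr_arm es t = v}" using q unfolding f_def by simp
  qed
  have "T1 div m = card (f ` {..<T1 div m})" using card_image[OF inj] by simp
  also have "\<dots> \<le> card {t \<in> {1..T1}. rr_arm es t = v}" by (rule card_mono[OF _ sub]) simp
  finally show ?thesis unfolding m_def .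
qed

lemma inv_count:
  assumes "v \<in> set es" "length es \<le> T1"
  shows "card {t \<in> {1..T1}. rr_arm es t = v} > 0"
    "1 / real (card {t \<in> {1..T1}. rr_arm es t = v}) \<le> 2 * real (length es) / real T1"
proof -
  define m where "m = length es"
  define n where "n = card {t \<in> {1..T1}. rr_arm es t = v}"
  have m0: "m > 0" using assms(1) unfolding m_def by (cases es) auto
  have d1: "T1 div m \<ge> 1" using assms(2) m0 unfolding m_def[symmetric] by (simp add: Suc_le_eq div_greater_zero_iff)
  have nd: "T1 div m \<le> n" using count_rr[OF assms] unfolding m_def n_def .
  show "card {t \<in> {1..T1}. rr_arm es t = v} > 0" using nd d1 unfolding n_def by simp
  have "T1 = (T1 div m) * m + T1 mod m" by simp
  moreover have "T1 mod m < m" using m0 by simp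
  moreover have "m \<le> (T1 div m) * m" using d1 by simp
  ultimately have "T1 \<le> 2 * (T1 div m) * m" by linarith
  also have "\<dots> \<le> 2 * n * m" using nd by simp
  finally have "real T1 \<le> 2 * real n * real m" by (metis of_nat_le_iff of_nat_mult of_nat_numeral)
  moreover have "n > 0" using nd d1 by simp
  moreover have "T1 > 0" using assms(2) m0 unfolding m_def by linarith
  ultimately show "1 / real (card {t \<in> {1..T1}. rr_arm es t = v}) \<le> 2 * real (length es) / real T1"
    unfolding n_def[symmetric] m_def[symmetric] by (simp add: field_simps)
qed



lemma sum_two:
  fixes f :: "'t \<Rightarrow> real"
  assumes "finite I" "a \<noteq> b"
  shows "(\<Sum>t\<in>I. (if r t = a then x else if r t = b then y else 0) * f t)
       = x * (\<Sum>t\<in>{t\<in>I. r t = a}. f t) + y * (\<Sum>t\<in>{t\<in>I. r t = b}. f t)"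
proof -
  have "(\<Sum>t\<in>I. (if r t = a then x else if r t = b then y else 0) * f t)
      = (\<Sum>t\<in>I. (if r t = a then x * f t else 0) + (if r t = b then y * f t else 0))"
    using assms(2) by (intro sum.cong) auto
  also have "\<dots> = (\<Sum>t\<in>I. (if r t = a then x * f t else 0)) + (\<Sum>t\<in>I. (if r t = b then y * f t else 0))"
    by (rule sum.distrib)
  also have "\<dots> = (\<Sum>t\<in>{t\<in>I. r t = a}. x * f t) + (\<Sum>t\<in>{t\<in>I. r t = b}. y * f t)"
    using assms(1) by (simp add: sum.inter_filter)
  finally show ?thesis by (simp add: sum_distrib_left)
qed

lemma main:
  fixes S :: "nat \<Rightarrow> (nat \<Rightarrow> nat) \<Rightarrow> (nat \<Rightarrow> nat \<Rightarrow> real) \<Rightarrow> 'e"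
    and Y :: "nat \<Rightarrow> (nat \<Rightarrow> nat) \<Rightarrow> real" and D :: "real measure" and es :: "(nat \<Rightarrow> 'e) list"
  assumes Yb: "\<forall>i<N. \<forall>A\<in>superarms N K. 0 \<le> Y i A \<and> Y i A \<le> 1"
   and sg: "sub_gaussian1 D" and dist: "distinct es" and ses: "set es = U_E N K S H Us Cl"
   and c2: "2 \<le> card (U_E N K S H Us Cl)" and cT1: "card (U_E N K S H Us Cl) \<le> T1"
   and Sa: "Sa \<in> U_E N K S H Us Cl" and Sb: "Sb \<in> U_E N K S H Us Cl" and ne: "Sa \<noteq> Sb"
  shows "(\<integral>\<^sup>+ \<omega>. ennreal \<bar>ATE_hat N Y es T1 \<omega> Sa Sb - ATE N K S H Y Sa Sb\<bar>
        \<partial>(phase1_space N K S H D es T1))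
      \<le> ennreal (sqrt (4 * (2 + 8 * exp (1/2))) * sqrt (real (card (U_E N K S H Us Cl)) / real T1))"
proof -
  define U where "U = U_E N K S H Us Cl"
  define m where "m = card U"
  have len: "length es = m" using distinct_card[OF dist] ses unfolding m_def U_def by simp
  have esne: "es \<noteq> []" using len c2 unfolding m_def U_def by auto
  have rrU: "rr_arm es t \<in> U" for t
    unfolding rr_arm_def U_def ses[symmetric] using esne by (intro nth_mem) simp
  have N0: "N > 0"
  proof (rule ccontr)
    assume "\<not> N > 0"
    then have "N = 0" by simp
    then have "U \<subseteq> {\<lambda>_. undefined}" unfolding U_def U_E_def U_C_def by auto
    then have "card U \<le> 1" using card_mono[of "{\<lambda>_. undefined}" U] by simp
    then show False using c2 unfolding U_def by simp
  qed
  have Pfin: "finite (preimg N K S H v)" for v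
    by (rule finite_subset[of _ "superarms N K"]) (auto simp: preimg_def superarms_def intro!: finite_PiE)
  have Pne: "preimg N K S H v \<noteq> {}" if "v \<in> U" for v
    using that unfolding U_def U_E_def U_O_def preimg_def by auto
  have YbP: "\<forall>i<N. \<forall>A\<in>preimg N K S H v. 0 \<le> Y i A \<and> Y i A \<le> 1" for v
    using Yb unfolding preimg_def by auto
  define \<mu> where "\<mu> v = (1/real N) * (\<Sum>i<N. (\<Sum>A\<in>preimg N K S H v. Y i A) / real (card (preimg N K S H v)))" for v
  define M where "M t = measure_pmf (pmf_of_set (preimg N K S H (rr_arm es t))) \<Otimes>\<^sub>M PiM {..<N} (\<lambda>_. D)" for t
  define h where "h t x = (1/real N) * (\<Sum>i<N. Y i (fst x) + snd x i) - \<mu> (rr_arm es t)" for t x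
  define V0 :: real where "V0 = 2 + 8 * exp (1/2)"
  have rm: "prob_space (M t) \<and> h t \<in> borel_measurable (M t) \<and> integrable (M t) (\<lambda>x. (h t x)^2)
     \<and> integral\<^sup>L (M t) (h t) = 0 \<and> integral\<^sup>L (M t) (\<lambda>x. (h t x)^2) \<le> V0" for t
    using round_moments[OF Pfin Pne[OF rrU[of t]] YbP sg N0 refl]
    unfolding M_def h_def \<mu>_def V0_def by auto
  have pps: "product_prob_space M"
    unfolding product_prob_space_def product_prob_space_axioms_def product_sigma_finite_def
    using rm prob_space_imp_sigma_finite by auto
  define I where "I = {1..T1}"
  define R where "R v = {t\<in>I. rr_arm es t = v}" for v
  define nv where "nv = card (R Sa)"
  define nw where "nw = card (R Sb)"
  have SaE: "Sa \<in> set es" and SbE: "Sb \<in> set es" using Sa Sb ses by auto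
  have lT1: "length es \<le> T1" using len cT1 unfolding m_def U_def by simp
  note ci = inv_count[OF SaE lT1] inv_count[OF SbE lT1]
  have nv0: "nv > 0" and nw0: "nw > 0" using ci unfolding nv_def nw_def R_def I_def by auto
  have nvb: "1 / real nv \<le> 2 * real m / real T1" and nwb: "1 / real nw \<le> 2 * real m / real T1"
    using ci unfolding nv_def nw_def R_def I_def len by auto
  define c where "c t = (if rr_arm es t = Sa then 1 / real nv else if rr_arm es t = Sb then - 1 / real nw else 0)" for t
  have finI: "finite I" unfolding I_def by simp
  have VS: "integrable (PiM I M) (\<lambda>\<omega>. (\<Sum>t\<in>I. c t * h t (\<omega> t))^2) \<and>
         integral\<^sup>L (PiM I M) (\<lambda>\<omega>. (\<Sum>t\<in>I. c t * h t (\<omega> t))^2) \<le> V0 * (\<Sum>t\<in>I. (c t)^2)"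
    by (rule var_sum_prod[OF pps finI]) (use rm in auto)
  define X where "X \<omega> = (\<Sum>t\<in>I. c t * h t (\<omega> t))" for \<omega> :: "nat \<Rightarrow> (nat \<Rightarrow> nat) \<times> (nat \<Rightarrow> real)"
  have Rhat_eq: "Rhat N Y es T1 \<omega> v = (\<Sum>t\<in>R v. h t (\<omega> t)) / real (card (R v)) + \<mu> v"
    if "card (R v) > 0" for \<omega> v
  proof -
    have Rne: "R v \<noteq> {}" using that by auto
    have "(\<Sum>t\<in>R v. (1 / real N) * (\<Sum>i<N. Y i (fst (\<omega> t)) + snd (\<omega> t) i))
        = (\<Sum>t\<in>R v. h t (\<omega> t) + \<mu> v)"
      by (intro sum.cong refl) (simp add: h_def R_def)
    also have "\<dots> = (\<Sum>t\<in>R v. h t (\<omega> t)) + real (card (R v)) * \<mu> v"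
      by (simp add: sum.distrib)
    finally show ?thesis using Rne that unfolding Rhat_def Let_def R_def[symmetric] I_def[symmetric]
      by (simp add: field_simps)
  qed
  have ATE_eq: "ATE N K S H Y Sa Sb = \<mu> Sa - \<mu> Sb"
    unfolding ATE_def \<mu>_def Ytil_def by (simp add: sum_subtractf right_diff_distrib)
  have X_eq: "ATE_hat N Y es T1 \<omega> Sa Sb - ATE N K S H Y Sa Sb = X \<omega>" for \<omega>
  proof -
    have "X \<omega> = 1 / real nv * (\<Sum>t\<in>R Sa. h t (\<omega> t)) + (- 1 / real nw) * (\<Sum>t\<in>R Sb. h t (\<omega> t))"
      unfolding X_def c_def R_def by (rule sum_two[OF finI ne])
    moreover have "Rhat N Y es T1 \<omega> Sa = (\<Sum>t\<in>R Sa. h t (\<omega> t)) / real nv + \<mu> Sa"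
      using Rhat_eq[of Sa \<omega>] nv0 unfolding nv_def by simp
    moreover have "Rhat N Y es T1 \<omega> Sb = (\<Sum>t\<in>R Sb. h t (\<omega> t)) / real nw + \<mu> Sb"
      using Rhat_eq[of Sb \<omega>] nw0 unfolding nw_def by simp
    ultimately show ?thesis unfolding ATE_hat_def ATE_eq by simp
  qed
  have csum: "(\<Sum>t\<in>I. (c t)^2) = 1 / real nv + 1 / real nw"
  proof -
    have "(\<Sum>t\<in>I. (c t)^2) = (\<Sum>t\<in>I. (if rr_arm es t = Sa then (1 / real nv)^2 else if rr_arm es t = Sb then (1 / real nw)^2 else 0) * 1)"
      unfolding c_def by (intro sum.cong refl) (simp add: power2_eq_square)
    also have "\<dots> = (1 / real nv)^2 * real nv + (1 / real nw)^2 * real nw"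
      by (subst sum_two[OF finI ne]) (simp add: nv_def nw_def R_def)
    also have "\<dots> = 1 / real nv + 1 / real nw" using nv0 nw0 by (simp add: power2_eq_square)
    finally show ?thesis .
  qed
  have PI: "phase1_space N K S H D es T1 = PiM I M" unfolding phase1_space_def I_def M_def ..
  have pP: "prob_space (PiM I M)" by (rule prob_space_PiM) (use rm in auto)
  have Xm: "X \<in> borel_measurable (PiM I M)" unfolding X_def
  proof (intro borel_measurable_sum borel_measurable_times borel_measurable_const)
    fix t assume "t \<in> I"
    show "(\<lambda>\<omega>. h t (\<omega> t)) \<in> borel_measurable (PiM I M)"
      using measurable_compose[OF measurable_component_singleton[OF \<open>t \<in> I\<close>], of "h t" M borel] rm by auto
  qed
  define V where "V = V0 * (1 / real nv + 1 / real nw)"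
  have V0p: "V0 > 0" unfolding V0_def by (simp add: add_pos_pos)
  have Vp: "V > 0" unfolding V_def using V0p nv0 nw0 by (intro mult_pos_pos add_pos_pos) auto
  have "(\<integral>\<^sup>+ \<omega>. ennreal \<bar>X \<omega>\<bar> \<partial>PiM I M) \<le> ennreal (sqrt V)"
    by (rule abs_le_sqrt[OF pP Xm]) (use VS csum Vp in \<open>auto simp: X_def V_def\<close>)
  also have "sqrt V \<le> sqrt (4 * V0) * sqrt (real m / real T1)"
  proof -
    have "V \<le> V0 * (4 * real m / real T1)" unfolding V_def using nvb nwb V0p
      by (intro mult_left_mono) auto
    also have "\<dots> = (4 * V0) * (real m / real T1)" by simp
    finally show ?thesis by (simp add: real_sqrt_mult[symmetric])
  qed
  finally show ?thesis unfolding PI X_eq V0_def[symmetric] m_def U_def by (simp add: ennreal_leI)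
qed


theorem theorem3:
  shows "\<exists>C>0. \<exists>k::nat. \<forall>(N::nat) (K::nat) (T::nat) (T1::nat) (H::nat \<Rightarrow> nat \<Rightarrow> real)
      (S::nat \<Rightarrow> (nat \<Rightarrow> nat) \<Rightarrow> (nat \<Rightarrow> nat \<Rightarrow> real) \<Rightarrow> 'e) (Us::'e set) (Cl::nat set set)
      (Y::nat \<Rightarrow> (nat \<Rightarrow> nat) \<Rightarrow> real) (D::real measure) (es::(nat \<Rightarrow> 'e) list) Si Sj.
    finite Us \<and> (\<forall>i<N. \<forall>A\<in>superarms N K. S i A H \<in> Us) \<and>
    partition_on {..<N} Cl \<and>
    (\<forall>i<N. \<forall>A\<in>superarms N K. 0 \<le> Y i A \<and> Y i A \<le> 1) \<and>
    sub_gaussian1 D \<and>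
    distinct es \<and> set es = U_E N K S H Us Cl \<and>
    2 \<le> card (U_E N K S H Us Cl) \<and> card (U_E N K S H Us Cl) \<le> T \<and>
    card (U_E N K S H Us Cl) \<le> T1 \<and> T1 \<le> T \<and>
    Si \<in> U_E N K S H Us Cl \<and> Sj \<in> U_E N K S H Us Cl \<and> Si \<noteq> Sj
    \<longrightarrow>
    (\<integral>\<^sup>+ \<omega>. ennreal \<bar>ATE_hat N Y es T1 \<omega> Si Sj - ATE N K S H Y Si Sj\<bar>
        \<partial>(phase1_space N K S H D es T1))
      \<le> ennreal (C * (ln (real T + real K + 2)) ^ k
                   * sqrt (real (card (U_E N K S H Us Cl)) / real T1))"
  proof (rule exI[of _ "sqrt (4 * (2 + 8 * exp (1/2)))"], rule conjI)
  show "sqrt (4 * (2 + 8 * exp (1/2))) > (0::real)" by (simp add: add_pos_pos)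
next
  show "\<exists>k::nat. \<forall>(N::nat) (K::nat) (T::nat) (T1::nat) (H::nat \<Rightarrow> nat \<Rightarrow> real)
      (S::nat \<Rightarrow> (nat \<Rightarrow> nat) \<Rightarrow> (nat \<Rightarrow> nat \<Rightarrow> real) \<Rightarrow> 'e) (Us::'e set) (Cl::nat set set)
      (Y::nat \<Rightarrow> (nat \<Rightarrow> nat) \<Rightarrow> real) (D::real measure) (es::(nat \<Rightarrow> 'e) list) Si Sj.
    finite Us \<and> (\<forall>i<N. \<forall>A\<in>superarms N K. S i A H \<in> Us) \<and>
    partition_on {..<N} Cl \<and>
    (\<forall>i<N. \<forall>A\<in>superarms N K. 0 \<le> Y i A \<and> Y i A \<le> 1) \<and>
    sub_gaussian1 D \<and>
    distinct es \<and> set es = U_E N K S H Us Cl \<and>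
    2 \<le> card (U_E N K S H Us Cl) \<and> card (U_E N K S H Us Cl) \<le> T \<and>
    card (U_E N K S H Us Cl) \<le> T1 \<and> T1 \<le> T \<and>
    Si \<in> U_E N K S H Us Cl \<and> Sj \<in> U_E N K S H Us Cl \<and> Si \<noteq> Sj
    \<longrightarrow>
    (\<integral>\<^sup>+ \<omega>. ennreal \<bar>ATE_hat N Y es T1 \<omega> Si Sj - ATE N K S H Y Si Sj\<bar>
        \<partial>(phase1_space N K S H D es T1))
      \<le> ennreal (sqrt (4 * (2 + 8 * exp (1/2))) * (ln (real T + real K + 2)) ^ k
                   * sqrt (real (card (U_E N K S H Us Cl)) / real T1))"
    apply (rule exI[of _ 0])
    apply (intro allI impI)
    apply (elim conjE)
    apply (simp only: power_0 mult_1_right)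
    apply (rule main)
    apply assumption+
    done
qed

end
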